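(* There is a universal constant $C<\infty$ such that for every power of two $L\ge2$, every $l\in\{1,2,4,\dots,\frac L2\}$ and every $\hat D\ge C$, $$\ln\#\Big\{\bar h\ :\ \max_{\rho}\Big(\frac{l}{\rho}\Big)^2\frac{D(\bar h_\rho)}{L}<\hat D\Big\}\le C\,\frac{L}{l}\,\ln\hat D,$$ where $\bar h$ ranges over functions $\bar h:\{0,2l,4l,\dots,L\}\to2l\mathbb Z$ with $\bar h(0)=\bar h(L)=0$, and $\rho$ ranges over the dyadic scales $\{2l,4l,\dots,\frac L2\}$ (a maximum over the empty set being $0$).
   Context: Each such $\bar h$ is identified with the function on $\{0,\dots,L\}$ that agrees with $\bar h$ on $2l\mathbb Z\cap[0,L]$ and is affine in between. For a function $h$ on $\{0,\dots,L\}$ and dyadic $\rho\in\{1,\dots,L\}$, $h_{\ge\rho}$ is the function on $\{0,\dots,L\}$ agreeing with $h$ on $\rho\mathbb Z\cap[0,L]$ and affine between consecutive points of $\rho\mathbb Z\cap[0,L]$; for $\rho\le L/2$, $h_\rho:=h_{\ge\rho}-h_{\ge2\rho}$. $D(h)=\frac12\sum_{x=1}^L(h(x)-h(x-1))^2$. *)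

theory Defs
  imports Complex_Main
begin

definition interp :: "nat \<Rightarrow> (nat \<Rightarrow> real) \<Rightarrow> nat \<Rightarrow> real" where
  "interp \<rho> h x =
     h ((x div \<rho>) * \<rho>)
     + (real (x mod \<rho>) / real \<rho>) * (h ((x div \<rho>) * \<rho> + \<rho>) - h ((x div \<rho>) * \<rho>))"

definition hge :: "nat \<Rightarrow> (nat \<Rightarrow> real) \<Rightarrow> nat \<Rightarrow> real" where
  "hge \<rho> h = interp \<rho> h"

definition hscale :: "nat \<Rightarrow> (nat \<Rightarrow> real) \<Rightarrow> nat \<Rightarrow> real" where
  "hscale \<rho> h = (\<lambda>x. hge \<rho> h x - hge (2 * \<rho>) h x)"

definition Dir :: "nat \<Rightarrow> (nat \<Rightarrow> real) \<Rightarrow> real" where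
  "Dir L h = (1/2) * (\<Sum>x = 1..L. (h x - h (x - 1))^2)"

definition scales :: "nat \<Rightarrow> nat \<Rightarrow> nat set" where
  "scales L l = {\<rho>. (\<exists>k. \<rho> = 2 ^ k) \<and> 2 * l \<le> \<rho> \<and> 2 * \<rho> \<le> L}"

text \<open>Coarse-grained height functions hbar : {0,2l,...,L} -> 2lZ with hbar 0 = hbar L = 0,
  encoded as functions nat => int vanishing off the grid.\<close>
definition coarse_fns :: "nat \<Rightarrow> nat \<Rightarrow> (nat \<Rightarrow> int) set" where
  "coarse_fns L l = {hb. (\<forall>x. \<not> (2 * l dvd x \<and> x \<le> L) \<longrightarrow> hb x = 0)
                       \<and> (\<forall>x. int (2 * l) dvd hb x) \<and> hb 0 = 0 \<and> hb L = 0}"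

definition ext :: "nat \<Rightarrow> (nat \<Rightarrow> int) \<Rightarrow> nat \<Rightarrow> real" where
  "ext l hb = interp (2 * l) (\<lambda>x. real_of_int (hb x))"

definition maxq :: "nat \<Rightarrow> nat \<Rightarrow> (nat \<Rightarrow> int) \<Rightarrow> real" where
  "maxq L l hb =
    (if scales L l = {} then 0
     else Max ((\<lambda>\<rho>. (real l / real \<rho>)^2 * Dir L (hscale \<rho> (ext l hb)) / real L) ` scales L l))"

end

theory Submission
  imports Defs "HOL-Library.FuncSet"
begin

lemma cs_sum:
  fixes d :: "nat \<Rightarrow> real"
  shows "(\<Sum>i<n. d i)^2 \<le> real n * (\<Sum>i<n. (d i)^2)"
proof (induction n)
  case 0 then show ?case by simp
next
  case (Suc n)
  define S where "S = (\<Sum>i<n. d i)"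
  define Q where "Q = (\<Sum>i<n. (d i)^2)"
  have h: "S^2 \<le> real n * Q" using Suc by (simp add: S_def Q_def)
  have q0: "0 \<le> Q" unfolding Q_def by (simp add: sum_nonneg)
  have "2 * S * d n \<le> Q + real n * (d n)^2"
  proof (cases "n = 0")
    case True then show ?thesis by (simp add: S_def Q_def)
  next
    case False
    hence np: "real n > 0" by simp
    have "0 \<le> (S - real n * d n)^2" by simp
    hence "2 * S * d n * real n \<le> S^2 + (real n)^2 * (d n)^2" by (simp add: power2_eq_square algebra_simps)
    also have "\<dots> \<le> real n * Q + (real n)^2 * (d n)^2" using h by simp
    finally have "real n * (2 * S * d n) \<le> real n * (Q + real n * (d n)^2)" by (simp add: power2_eq_square algebra_simps)
    thus ?thesis using np by simp
  qed
  hence "(S + d n)^2 \<le> real (Suc n) * (Q + (d n)^2)" using h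
    by (simp add: power2_eq_square algebra_simps)
  then show ?case by (simp add: S_def Q_def)
qed

lemma block_bound:
  fixes g :: "nat \<Rightarrow> real"
  assumes "r > 0"
  shows "(g (a + r) - g a)^2 / real r \<le> (\<Sum>x\<in>{a..<a+r}. (g (Suc x) - g x)^2)"
proof -
  have t: "(\<Sum>i<r. g (a + Suc i) - g (a + i)) = g (a + r) - g a"
    using sum_lessThan_telescope[of "\<lambda>i. g (a + i)" r] by simp
  have "(\<Sum>x\<in>{a..<a+r}. (g (Suc x) - g x)^2) = (\<Sum>i<r. (g (a + Suc i) - g (a + i))^2)"
    by (rule sum.reindex_bij_witness[where i="\<lambda>i. a + i" and j="\<lambda>x. x - a"]) auto
  moreover have "(g (a + r) - g a)^2 \<le> real r * (\<Sum>i<r. (g (a + Suc i) - g (a + i))^2)"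
    using cs_sum[of "\<lambda>i. g (a + Suc i) - g (a + i)" r] t by simp
  ultimately show ?thesis using assms by (simp add: divide_le_eq mult.commute)
qed

lemma geom_bound:
  fixes q :: real assumes "q > 0"
  shows "(\<Sum>i\<le>K. exp (- real i / q)) \<le> 1 + q"
proof -
  define r where "r = exp (- 1 / q)"
  have r0: "0 < r" "r < 1" using assms by (auto simp: r_def)
  have e: "exp (- real i / q) = r ^ i" for i
    by (simp add: r_def exp_of_nat_mult[symmetric] field_simps)
  have "(1 - r) * (\<Sum>i\<le>K. r ^ i) = 1 - r ^ Suc K"
    using one_diff_power_eq[of r "Suc K"] by (simp add: lessThan_Suc_atMost)
  also have "\<dots> \<le> 1" using r0 by simp
  finally have s: "(\<Sum>i\<le>K. r ^ i) \<le> 1 / (1 - r)" using r0 by (simp add: field_simps mult.commute)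
  have "1 + 1 / q \<le> exp (1 / q)" by (rule exp_ge_add_one_self)
  hence "(1 + q) * r \<le> q"
    using assms by (simp add: r_def exp_minus field_simps)
  hence "1 / (1 - r) \<le> 1 + q" using r0 assms by (simp add: field_simps)
  with s e show ?thesis by simp
qed

lemma int_sym_sum:
  fixes q :: real and M :: int assumes "q > 0" and M0: "M \<ge> 0"
  shows "(\<Sum>k\<in>{-M..M}. exp (- \<bar>real_of_int k\<bar> / q)) \<le> 2 * (1 + q)"
proof -
  let ?f = "\<lambda>k::int. exp (- \<bar>real_of_int k\<bar> / q)"
  have sub: "{-M..M} \<subseteq> {-M..0} \<union> {0..M}" by auto
  have "(\<Sum>k\<in>{-M..M}. ?f k) \<le> (\<Sum>k\<in>{-M..0} \<union> {0..M}. ?f k)"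
    by (rule sum_mono2) (use sub in auto)
  also have "\<dots> \<le> (\<Sum>k\<in>{-M..0}. ?f k) + (\<Sum>k\<in>{0..M}. ?f k)"
    by (subst sum_Un) (auto intro: sum_nonneg)
  also have "(\<Sum>k\<in>{0..M}. ?f k) = (\<Sum>i\<le>nat M. exp (- real i / q))"
    by (rule sum.reindex_bij_witness[where i="int" and j="nat"]) (use M0 in auto)
  also have "(\<Sum>k\<in>{-M..0}. ?f k) = (\<Sum>i\<le>nat M. exp (- real i / q))"
    by (rule sum.reindex_bij_witness[where i="\<lambda>i. - int i" and j="\<lambda>k. nat (- k)"]) (use M0 in auto)
  finally show ?thesis using geom_bound[OF assms(1), of "nat M"] by simp
qed

lemma count_ball:
  fixes N :: nat and R :: real
  assumes N0: "N > 0" and R0: "R > 0"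
  defines "B \<equiv> {e \<in> PiE {..<N} (\<lambda>_. UNIV::int set). (\<Sum>m<N. (real_of_int (e m))^2) < R}"
  shows "finite B \<and> real (card B) \<le> (2 * exp 1 * (1 + sqrt (R / N)))^N"
proof -
  define q where "q = sqrt (R / N)"
  have q0: "q > 0" using N0 R0 by (simp add: q_def)
  have Rq: "R = real N * q^2" using N0 R0 by (simp add: q_def)
  have absb: "\<bar>x\<bar> \<le> (x^2 + q^2) / (2 * q)" for x :: real
  proof -
    have "0 \<le> (\<bar>x\<bar> - q)^2" by simp
    hence "2 * q * \<bar>x\<bar> \<le> x^2 + q^2" by (simp add: power2_eq_square algebra_simps)
    thus ?thesis using q0 by (simp add: field_simps)
  qed
  have l1: "(\<Sum>m<N. \<bar>real_of_int (e m)\<bar>) \<le> real N * q" if "e \<in> B" for e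
  proof -
    have "(\<Sum>m<N. \<bar>real_of_int (e m)\<bar>) \<le> (\<Sum>m<N. ((real_of_int (e m))^2 + q^2) / (2 * q))"
      by (rule sum_mono) (rule absb)
    also have "\<dots> = ((\<Sum>m<N. (real_of_int (e m))^2) + real N * q^2) / (2 * q)"
      by (simp add: sum_divide_distrib[symmetric] sum.distrib)
    also have "\<dots> \<le> (R + R) / (2 * q)"
      using that q0 Rq by (intro divide_right_mono) (auto simp: B_def)
    also have "\<dots> = real N * q" using Rq q0 by (simp add: field_simps power2_eq_square)
    finally show ?thesis .
  qed
  define M where "M = \<lfloor>real N * q\<rfloor>"
  have M0: "M \<ge> 0" unfolding M_def using q0 by simp
  define Box where "Box = PiE {..<N} (\<lambda>_. {-M..M})"
  have fBox: "finite Box" unfolding Box_def by (rule finite_PiE) auto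
  have sub: "B \<subseteq> Box"
  proof
    fix e assume e: "e \<in> B"
    have "\<bar>real_of_int (e m)\<bar> \<le> real N * q" if "m < N" for m
    proof -
      have "\<bar>real_of_int (e m)\<bar> \<le> (\<Sum>m<N. \<bar>real_of_int (e m)\<bar>)"
        using that by (intro member_le_sum) auto
      thus ?thesis using l1[OF e] by simp
    qed
    hence "\<bar>e m\<bar> \<le> M" if "m < N" for m
      using that unfolding M_def by (simp add: le_floor_iff)
    thus "e \<in> Box" using e unfolding Box_def B_def by (force simp: PiE_iff abs_le_iff)
  qed
  have fB: "finite B" using finite_subset[OF sub fBox] .
  have "real (card B) = (\<Sum>e\<in>B. 1)" by simp
  also have "\<dots> \<le> (\<Sum>e\<in>B. exp (real N) * (\<Prod>m<N. exp (- \<bar>real_of_int (e m)\<bar> / q)))"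
  proof (rule sum_mono)
    fix e assume e: "e \<in> B"
    have "(\<Prod>m<N. exp (- \<bar>real_of_int (e m)\<bar> / q)) = exp (\<Sum>m<N. - \<bar>real_of_int (e m)\<bar> / q)"
      by (simp add: exp_sum)
    also have "(\<Sum>m<N. - \<bar>real_of_int (e m)\<bar> / q) = - (\<Sum>m<N. \<bar>real_of_int (e m)\<bar>) / q"
      by (simp add: sum_divide_distrib[symmetric] sum_negf)
    finally have eq: "exp (real N) * (\<Prod>m<N. exp (- \<bar>real_of_int (e m)\<bar> / q))
        = exp (real N - (\<Sum>m<N. \<bar>real_of_int (e m)\<bar>) / q)" by (simp add: exp_diff exp_minus field_simps)
    have "(\<Sum>m<N. \<bar>real_of_int (e m)\<bar>) / q \<le> real N"
      using l1[OF e] q0 by (simp add: divide_le_eq)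
    hence "1 \<le> exp (real N - (\<Sum>m<N. \<bar>real_of_int (e m)\<bar>) / q)" by simp
    thus "1 \<le> exp (real N) * (\<Prod>m<N. exp (- \<bar>real_of_int (e m)\<bar> / q))" using eq by simp
  qed
  also have "\<dots> \<le> (\<Sum>e\<in>Box. exp (real N) * (\<Prod>m<N. exp (- \<bar>real_of_int (e m)\<bar> / q)))"
    by (rule sum_mono2[OF fBox sub]) (simp add: prod_nonneg)
  also have "\<dots> = exp (real N) * (\<Prod>m<N. \<Sum>k\<in>{-M..M}. exp (- \<bar>real_of_int k\<bar> / q))"
  proof -
    have "(\<Prod>m<N. \<Sum>k\<in>{-M..M}. exp (- \<bar>real_of_int k\<bar> / q))
       = (\<Sum>e\<in>Box. \<Prod>m<N. exp (- \<bar>real_of_int (e m)\<bar> / q))"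
      unfolding Box_def by (rule prod_sum_PiE) auto
    thus ?thesis by (simp add: sum_distrib_left)
  qed
  also have "\<dots> \<le> exp (real N) * (\<Prod>m<N. 2 * (1 + q))"
    using int_sym_sum[OF q0 M0] by (intro mult_left_mono prod_mono) (auto intro: sum_nonneg)
  also have "\<dots> = (2 * exp 1 * (1 + q))^N"
  proof -
    have "exp (real N) = exp 1 ^ N" by (simp add: exp_of_nat_mult[symmetric])
    moreover have "(2 * exp 1 * (1 + q))^N = exp 1 ^ N * (2 * (1 + q))^N"
      by (metis mult.commute mult.left_commute power_mult_distrib)
    ultimately show ?thesis by simp
  qed
  finally show ?thesis using fB by (simp add: q_def)
qed

lemma interp_at:
  assumes "0 < r" shows "interp r h (a * r) = h (a * r)"
  using assms by (simp add: interp_def)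

lemma interp_mid:
  assumes "0 < r"
  shows "interp (2 * r) h ((2 * m + 1) * r) = h (2 * m * r) + (h ((2 * m + 2) * r) - h (2 * m * r)) / 2"
proof -
  have e: "(2 * m + 1) * r = m * (2 * r) + r" by (simp add: algebra_simps)
  have d: "((2 * m + 1) * r) div (2 * r) = m" unfolding e using assms by simp
  have md: "((2 * m + 1) * r) mod (2 * r) = r" unfolding e using assms by simp
  show ?thesis unfolding interp_def d md using assms
    by (simp add: algebra_simps field_simps)
qed

definition dd :: "nat \<Rightarrow> (nat \<Rightarrow> int) \<Rightarrow> nat \<Rightarrow> int" where
  "dd k hb m = 2 * hb ((2*m+1)*2^k) - hb (2*m*2^k) - hb ((2*m+2)*2^k)"

lemma ext_at:
  assumes "l > 0" "2 * l dvd x"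
  shows "ext l hb x = real_of_int (hb x)"
proof -
  obtain a where "x = a * (2 * l)" using assms(2) by (auto simp: dvd_def mult.commute)
  thus ?thesis using assms(1) by (simp add: ext_def interp_at)
qed

lemma energy_lb:
  fixes hb :: "nat \<Rightarrow> int"
  assumes L: "L = 2^n" and l: "l = 2^j" and jk: "j + 1 \<le> k" and kn: "k + 1 \<le> n"
  shows "(\<Sum>m < L div 2^(k+1). (real_of_int (dd k hb m))^2) / (4 * 2^k)
           \<le> Dir L (hscale (2^k) (ext l hb))"
proof -
  define r :: nat where "r = 2^k"
  define N where "N = L div 2^(k+1)"
  have r0: "0 < r" by (simp add: r_def)
  have LN: "L = N * 2 * r"
  proof -
    have nn: "n = (k+1) + (n - (k+1))" using kn by simp
    have "L = 2^(k+1) * 2^(n - (k+1))" using L nn by (metis power_add)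
    thus ?thesis by (simp add: N_def r_def)
  qed
  define h where "h = ext l hb"
  define g where "g = hscale r h"
  have l0: "l > 0" by (simp add: l)
  have ldvd: "2 * l dvd r"
  proof -
    have "2 * l = 2^(j+1)" by (simp add: l)
    moreover have "(2::nat)^(j+1) dvd 2^k" using jk by (rule le_imp_power_dvd)
    ultimately show ?thesis unfolding r_def by simp
  qed
  have hat: "h (a * r) = real_of_int (hb (a * r))" for a
    unfolding h_def using ext_at[OF l0] ldvd by simp
  have g_even: "g (2 * m * r) = 0" for m
  proof -
    have "interp (2 * r) h (2 * m * r) = h (2 * m * r)"
      using interp_at[of "2*r" h m] r0 by (simp add: mult.commute mult.left_commute)
    moreover have "interp r h (2 * m * r) = h (2 * m * r)"
      using interp_at[OF r0, of h "2*m"] by simp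
    ultimately show ?thesis by (simp add: g_def hscale_def hge_def)
  qed
  have g_odd: "g ((2 * m + 1) * r) = real_of_int (dd k hb m) / 2" for m
  proof -
    have "g ((2 * m + 1) * r) = h ((2 * m + 1) * r) - (h (2 * m * r) + (h ((2 * m + 2) * r) - h (2 * m * r)) / 2)"
      using interp_at[OF r0, of h "2*m+1"] interp_mid[OF r0, of h m]
      by (simp add: g_def hscale_def hge_def)
    also have "\<dots> = real_of_int (dd k hb m) / 2"
      using hat[of "2*m+1"] hat[of "2*m"] hat[of "2*m+2"]
      by (simp add: dd_def r_def[symmetric] field_simps)
    finally show ?thesis .
  qed
  have D1: "Dir L g = (1/2) * (\<Sum>x<L. (g (Suc x) - g x)^2)"
  proof -
    have "(\<Sum>x = 1..L. (g x - g (x - 1))^2) = (\<Sum>x<L. (g (Suc x) - g x)^2)"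
      by (rule sum.reindex_bij_witness[where i="Suc" and j="\<lambda>x. x - 1"]) auto
    thus ?thesis by (simp add: Dir_def)
  qed
  have D2: "(\<Sum>x<L. (g (Suc x) - g x)^2) = (\<Sum>a<2*N. \<Sum>x\<in>{a*r..<a*r+r}. (g (Suc x) - g x)^2)"
    unfolding LN using sum.nat_group[of "\<lambda>x. (g (Suc x) - g x)^2" r "2*N"] by (simp add: mult.commute mult.left_commute)
  have D3: "(\<Sum>a<2*N. \<Sum>x\<in>{a*r..<a*r+r}. (g (Suc x) - g x)^2) \<ge> (\<Sum>a<2*N. (g (a*r + r) - g (a*r))^2 / real r)"
    by (intro sum_mono block_bound r0)
  have D4: "(\<Sum>a<2*N. (g (a*r + r) - g (a*r))^2 / real r)
      = (\<Sum>m<N. \<Sum>a\<in>{m*2..<m*2+2}. (g (a*r + r) - g (a*r))^2 / real r)"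
    using sum.nat_group[of "\<lambda>a. (g (a*r + r) - g (a*r))^2 / real r" 2 N] by (simp add: mult.commute)
  have D5: "(\<Sum>m<N. \<Sum>a\<in>{m*2..<m*2+2}. (g (a*r + r) - g (a*r))^2 / real r) = (\<Sum>m<N. 2 * ((real_of_int (dd k hb m))^2 / 4) / real r)"
  proof (rule sum.cong[OF refl])
    fix m :: nat
    have s: "{m*2..<m*2+2} = {2*m, 2*m+1}" by auto
    have e1: "2*m*r + r = (2*m+1)*r" by (simp add: algebra_simps)
    have e2: "(2*m+1)*r + r = 2*(m+1)*r" by (simp add: algebra_simps)
    have v1: "g (2*m*r + r) = real_of_int (dd k hb m) / 2" by (subst e1) (rule g_odd)
    have v2: "g (2*m*r) = 0" by (rule g_even)
    have v3: "g ((2*m+1)*r + r) = 0" by (subst e2) (rule g_even)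
    have v4: "g ((2*m+1)*r) = real_of_int (dd k hb m) / 2" by (rule g_odd)
    have "(\<Sum>a\<in>{m*2..<m*2+2}. (g (a*r + r) - g (a*r))^2 / real r)
       = (g (2*m*r + r) - g (2*m*r))^2 / real r + (g ((2*m+1)*r + r) - g ((2*m+1)*r))^2 / real r"
      unfolding s by simp
    also have "\<dots> = 2 * ((real_of_int (dd k hb m))^2 / 4) / real r"
      unfolding v1 v2 v3 v4 by (simp add: power2_eq_square field_simps)
    finally show "(\<Sum>a\<in>{m*2..<m*2+2}. (g (a*r + r) - g (a*r))^2 / real r) = 2 * ((real_of_int (dd k hb m))^2 / 4) / real r" .
  qed
  have "(\<Sum>m<N. 2 * ((real_of_int (dd k hb m))^2 / 4) / real r) / 2 \<le> Dir L g"
    using D1 D2 D3 D4 D5 by linarith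
  moreover have "(\<Sum>m<N. 2 * ((real_of_int (dd k hb m))^2 / 4) / real r) / 2
      = (\<Sum>m<N. (real_of_int (dd k hb m))^2) / (4 * real r)"
    by (simp add: sum_divide_distrib[symmetric] sum_distrib_left[symmetric] field_simps)
  ultimately show ?thesis by (simp add: g_def h_def N_def r_def)
qed

definition restr :: "nat \<Rightarrow> nat \<Rightarrow> (nat \<Rightarrow> int) \<Rightarrow> nat \<Rightarrow> int" where
  "restr L k hb = (\<lambda>x. if 2^k dvd x \<and> x \<le> L then hb x else 0)"

definition emap :: "nat \<Rightarrow> nat \<Rightarrow> nat \<Rightarrow> (nat \<Rightarrow> int) \<Rightarrow> nat \<Rightarrow> int" where
  "emap L l k hb = (\<lambda>m. if m < L div 2^(k+1) then dd k hb m div int (2*l) else undefined)"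

definition bset :: "nat \<Rightarrow> real \<Rightarrow> (nat \<Rightarrow> int) set" where
  "bset N R = {e \<in> PiE {..<N} (\<lambda>_. UNIV::int set). (\<Sum>m<N. (real_of_int (e m))^2) < R}"

lemma pw: fixes D :: real
  shows "4 * D * 2^(t+1+(i+j)) * (2^(i+j))^3 / (2^j)^2 / (4*(2^j)^2) = 2^t * (2*D*16^i)"
proof -
  have a: "(16::real)^i = 2^(4*i)" by (simp add: power_mult)
  have b1: "((2::real)^(i+j))^3 = 2^(3*(i+j))" by (metis power_mult mult.commute)
  have b2: "(2::real)^(t+1+(i+j)) * 2^(3*(i+j)) = 2^(t+1+(i+j) + 3*(i+j))" by (rule power_add[symmetric])
  have b3: "t+1+(i+j)+3*(i+j) = (t+1+4*i) + 4*j" by simp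
  have b4: "(2::real)^(4*j) = (2^j)^2 * (2^j)^2" by (simp add: power_mult[symmetric] power_add[symmetric])
  have b: "(2::real)^(t+1+(i+j)) * (2^(i+j))^3 = 2^(t + 1 + 4*i) * ((2^j)^2 * (2^j)^2)"
    unfolding b1 b2 b3 power_add[of _ "t+1+4*i" "4*j"] b4 ..
  have c: "(2::real)^(t + 1 + 4*i) = 2^t * 2 * 2^(4*i)" by (simp add: power_add)
  have "4 * D * 2^(t+1+(i+j)) * (2^(i+j))^3 / (2^j)^2 / (4*(2^j)^2)
      = D * ((2::real)^(t+1+(i+j)) * (2^(i+j))^3) / ((2^j)^2 * (2^j)^2)" by (simp add: field_simps)
  also have "\<dots> = D * 2^(t + 1 + 4*i)" unfolding b by simp
  finally show ?thesis unfolding a c by simp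
qed

lemma L_split:
  assumes "L = (2::nat)^n" "k + 1 \<le> n"
  shows "L = (L div 2^(k+1)) * 2^(k+1)" "L div 2^(k+1) = 2^(n-k-1)"
proof -
  have nn: "n = (k+1) + (n - (k+1))" using assms by simp
  have e: "L = 2^(k+1) * 2^(n - (k+1))" using assms nn by (metis power_add)
  thus "L = (L div 2^(k+1)) * 2^(k+1)" by simp
  show "L div 2^(k+1) = 2^(n-k-1)" using e by simp
qed

lemma dd_dvd:
  assumes "hb \<in> coarse_fns L l"
  shows "int (2*l) dvd dd k hb m"
  using assms unfolding coarse_fns_def dd_def by (intro dvd_diff dvd_mult) auto

lemma level_constraint:
  assumes L: "L = 2^n" and l: "l = 2^j" and jk: "j + 1 \<le> k" and kn: "k + 1 \<le> n"
    and hb: "hb \<in> coarse_fns L l" and mq: "maxq L l hb < Dh"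
  shows "emap L l k hb \<in> bset (L div 2^(k+1)) (real (L div 2^(k+1)) * (2 * Dh * 16^(k-j)))"
proof -
  define r :: nat where "r = 2^k"
  define N where "N = L div 2^(k+1)"
  have l0: "l > 0" by (simp add: l)
  have rs: "r \<in> scales L l"
  proof -
    have "2 * l = 2^(j+1)" by (simp add: l)
    also have "\<dots> \<le> 2^k" using jk by (intro power_increasing) auto
    finally have a: "2 * l \<le> r" by (simp add: r_def)
    have "2 * r = 2^(k+1)" by (simp add: r_def)
    also have "\<dots> \<le> 2^n" using kn by (intro power_increasing) auto
    finally have b: "2 * r \<le> L" using L by simp
    show ?thesis using a b unfolding scales_def r_def by auto
  qed
  have fs: "finite (scales L l)"
    by (rule finite_subset[of _ "{..L}"]) (auto simp: scales_def)
  define F where "F = (\<lambda>\<rho>. (real l / real \<rho>)^2 * Dir L (hscale \<rho> (ext l hb)) / real L)"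
  have "F r \<le> maxq L l hb"
    unfolding maxq_def F_def[symmetric] using rs fs by (auto intro: Max_ge)
  hence Fr: "F r < Dh" using mq by simp
  have Lpos: "real L > 0" using L by simp
  have rpos: "real r > 0" by (simp add: r_def)
  define S where "S = (\<Sum>m<N. (real_of_int (dd k hb m))^2)"
  have en: "S / (4 * real r) \<le> Dir L (hscale r (ext l hb))"
    using energy_lb[OF L l jk kn, of hb] by (simp add: S_def N_def r_def)
  have "(real l / real r)^2 * (S / (4 * real r)) / real L < Dh"
  proof -
    have "(real l / real r)^2 * (S / (4 * real r)) / real L \<le> F r"
      unfolding F_def using en Lpos by (intro divide_right_mono mult_left_mono) auto
    thus ?thesis using Fr by simp
  qed
  hence H: "(real l / real r)^2 * (S / (4 * real r)) / real L < Dh" .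
  have eq: "(real l / real r)^2 * (S / (4 * real r)) / real L = (S * real l^2) / (4 * real r ^ 3 * real L)"
    using rpos Lpos by (simp add: field_simps power2_eq_square power3_eq_cube)
  have pos: "0 < 4 * real r ^ 3 * real L" using rpos Lpos by simp
  have "S * real l^2 < Dh * (4 * real r ^ 3 * real L)"
    using H unfolding eq using pos by (simp add: pos_divide_less_eq)
  hence S_lt: "S < 4 * Dh * real L * real r ^ 3 / real l ^ 2"
    using l0 by (simp add: pos_less_divide_eq mult_ac)
  have "(\<Sum>m<N. (real_of_int (emap L l k hb m))^2) = (\<Sum>m<N. (real_of_int (dd k hb m))^2) / (4 * real l ^ 2)"
    unfolding sum_divide_distrib
  proof (rule sum.cong[OF refl])
    fix m assume "m \<in> {..<N}"
    hence "m < L div 2^(k+1)" unfolding N_def by blast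
    hence em: "emap L l k hb m = dd k hb m div int (2*l)" unfolding emap_def by (rule if_P)
    show "(real_of_int (emap L l k hb m))^2 = (real_of_int (dd k hb m))^2 / (4 * real l ^ 2)"
    proof -
      define e where "e = dd k hb m div int (2*l)"
      have dv: "int (2*l) dvd dd k hb m" by (rule dd_dvd[OF hb])
      have de: "dd k hb m = int (2*l) * e" unfolding e_def using dv by (rule dvd_mult_div_cancel[symmetric])
      have r: "real_of_int (dd k hb m) = 2 * real l * real_of_int e" unfolding de by simp
      have em2: "emap L l k hb m = e" using em unfolding e_def by (simp only:)
      have "(2 * real l * real_of_int e)^2 / (4 * real l ^ 2) = (real_of_int e)^2"
        using l0 by (simp add: power_mult_distrib)
      thus ?thesis unfolding em2 r by simp
    qed
  qed
  also have "\<dots> < (4 * Dh * real L * real r ^ 3 / real l ^ 2) / (4 * real l ^ 2)"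
    using S_lt l0 unfolding S_def by (intro divide_strict_right_mono) auto
  also have "\<dots> = real N * (2 * Dh * 16^(k-j))"
  proof -
    have N2: "N = 2^(n-k-1)" using L_split[OF L kn] by (simp add: N_def)
    define t where "t = n - k - 1"
    have t: "n = t + 1 + k" using kn unfolding t_def by simp
    define i where "i = k - j"
    have i: "k = i + j" using jk unfolding i_def by simp
    have "n - k - 1 = t" "k - j = i" using t i by auto
    hence tt: "n - k - 1 = t" and ii: "k - j = i" by auto
    have eL: "real L = 2^(t+1+(i+j))" using L t i by simp
    have er: "real r = 2^(i+j)" using i by (simp add: r_def)
    have el: "real l = 2^j" by (simp add: l)
    have eN: "real N = 2^t" using N2 tt by simp
    show ?thesis unfolding eL er el eN ii using pw[of Dh t i j] by simp
  qed
  finally show ?thesis unfolding bset_def N_def by (auto simp: emap_def PiE_iff extensional_def)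
qed

lemma reconstruct:
  assumes L: "L = 2^n" and l: "l = 2^j" and jk: "j + 1 \<le> k" and kn: "k + 1 \<le> n"
    and hb: "hb \<in> coarse_fns L l" and hb': "hb' \<in> coarse_fns L l"
    and r1: "restr L (k+1) hb = restr L (k+1) hb'" and e: "emap L l k hb = emap L l k hb'"
  shows "restr L k hb = restr L k hb'"
proof (rule ext)
  fix x
  have rr: "hb y = hb' y" if "2^(k+1) dvd y" "y \<le> L" for y
    using fun_cong[OF r1, of y] that by (simp add: restr_def)
  show "restr L k hb x = restr L k hb' x"
  proof (cases "2^k dvd x \<and> x \<le> L")
    case False thus ?thesis unfolding restr_def by (simp only: if_False)
  next
    case True
    then obtain a where xa: "x = a * 2^k" and xL: "x \<le> L" by (auto simp: dvd_def mult.commute)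
    have "hb x = hb' x"
    proof (cases "even a")
      case True
      then obtain b where "a = 2 * b" by auto
      hence "x = b * 2^(k+1)" using xa by simp
      thus ?thesis using rr xL by simp
    next
      case False
      define m where "m = a div 2"
      have am: "a = 2 * m + 1" using False unfolding m_def by simp
      define N where "N = L div 2^(k+1)"
      have LN: "L = N * 2^(k+1)" using L_split(1)[OF L kn] by (simp add: N_def)
      have "(2 * m + 1) * 2^k \<le> N * 2 * 2^k" using xa am xL LN by (simp add: mult_ac)
      hence "2 * m + 1 \<le> N * 2" using mult_le_cancel2[of "2 * m + 1" "2^k" "N * 2"] by simp
      hence mN: "m < N" by simp
      have ddeq: "dd k hb m = dd k hb' m"
      proof -
        have "emap L l k hb m = emap L l k hb' m" using e by simp
        hence q: "dd k hb m div int (2*l) = dd k hb' m div int (2*l)"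
          using mN by (simp add: emap_def N_def)
        have d1: "int (2*l) dvd dd k hb m" by (rule dd_dvd[OF hb])
        have d2: "int (2*l) dvd dd k hb' m" by (rule dd_dvd[OF hb'])
        have "dd k hb m = int (2*l) * (dd k hb m div int (2*l))" using d1 by (rule dvd_mult_div_cancel[symmetric])
        also have "\<dots> = int (2*l) * (dd k hb' m div int (2*l))" using q by simp
        also have "\<dots> = dd k hb' m" using d2 by (rule dvd_mult_div_cancel)
        finally show ?thesis .
      qed
      have y1: "hb (2*m*2^k) = hb' (2*m*2^k)"
      proof (rule rr)
        show "2^(k+1) dvd 2*m*2^k" by simp
        have "m * 2^(k+1) \<le> N * 2^(k+1)" using mN by simp
        thus "2*m*2^k \<le> L" using LN by (simp add: mult_ac)
      qed
      have y2: "hb ((2*m+2)*2^k) = hb' ((2*m+2)*2^k)"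
      proof (rule rr)
        have "(2*m+2)*2^k = (m+1) * 2^(k+1)" by simp
        thus "2^(k+1) dvd (2*m+2)*2^k" by simp
        have "(m+1) * 2^(k+1) \<le> N * 2^(k+1)" using mN by (intro mult_le_mono1) simp
        thus "(2*m+2)*2^k \<le> L" using LN by (simp add: mult_ac)
      qed
      have "2 * hb ((2*m+1)*2^k) = 2 * hb' ((2*m+1)*2^k)"
        using ddeq y1 y2 unfolding dd_def by simp
      thus ?thesis using xa am by simp
    qed
    thus ?thesis using True by (simp add: restr_def)
  qed
qed

lemma card_factor:
  assumes ff: "finite (f ` A)" and fg: "finite (g ` A)"
    and inj: "\<And>a b. a \<in> A \<Longrightarrow> b \<in> A \<Longrightarrow> f a = f b \<Longrightarrow> g a = g b \<Longrightarrow> h a = h b"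
  shows "finite (h ` A) \<and> card (h ` A) \<le> card (f ` A) * card (g ` A)"
proof -
  define p where "p = (\<lambda>a. (f a, g a))"
  define sel where "sel = (\<lambda>q. h (SOME a. a \<in> A \<and> p a = q))"
  have hA: "h ` A = sel ` (p ` A)"
  proof -
    have "sel (p a) = h a" if a: "a \<in> A" for a
    proof -
      have ex: "\<exists>b. b \<in> A \<and> p b = p a" using a by blast
      define b where "b = (SOME b. b \<in> A \<and> p b = p a)"
      have "b \<in> A \<and> p b = p a" unfolding b_def by (rule someI_ex[OF ex])
      hence "h b = h a" using inj[of b a] a by (simp add: p_def)
      thus ?thesis by (simp add: sel_def b_def)
    qed
    thus ?thesis by (auto simp: image_iff)
  qed
  have sub: "p ` A \<subseteq> f ` A \<times> g ` A" by (auto simp: p_def)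
  have fp: "finite (f ` A \<times> g ` A)" using ff fg by simp
  have "card (h ` A) \<le> card (p ` A)" unfolding hA by (rule card_image_le) (rule finite_subset[OF sub fp])
  also have "\<dots> \<le> card (f ` A \<times> g ` A)" by (rule card_mono[OF fp sub])
  also have "\<dots> = card (f ` A) * card (g ` A)" by (rule card_cartesian_product)
  finally show ?thesis unfolding hA using finite_subset[OF sub fp] by simp
qed

lemma levels:
  assumes L: "L = 2^n" and l: "l = 2^j" and jn: "j + 1 \<le> n" and Dh0: "Dh > 0"
  shows "d \<le> n - (j+1) \<Longrightarrow> finite (restr L (n-d) ` {hb \<in> coarse_fns L l. maxq L l hb < Dh})
     \<and> card (restr L (n-d) ` {hb \<in> coarse_fns L l. maxq L l hb < Dh})
        \<le> (\<Prod>k\<in>{n-d..<n}. card (bset (L div 2^(k+1)) (real (L div 2^(k+1)) * (2*Dh*16^(k-j)))))"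
proof (induction d)
  case 0
  let ?A = "{hb \<in> coarse_fns L l. maxq L l hb < Dh}"
  have sub: "restr L n ` ?A \<subseteq> {\<lambda>_. 0}"
  proof
    fix y assume "y \<in> restr L n ` ?A"
    then obtain hb where hb: "hb \<in> coarse_fns L l" and y: "y = restr L n hb" by auto
    have "restr L n hb = (\<lambda>_. 0)"
    proof (rule ext)
      fix x
      show "restr L n hb x = 0"
      proof (cases "2^n dvd x \<and> x \<le> L")
        case True
        then obtain c where xc: "x = L * c" using L by (auto simp: dvd_def)
        have Lp: "L > 0" using L by simp
        have "c \<le> 1"
        proof (rule ccontr)
          assume "\<not> c \<le> 1" hence "2 \<le> c" by simp
          hence "L * 2 \<le> L * c" by simp
          thus False using True xc Lp by simp
        qed
        hence "x = 0 \<or> x = L" using xc by (cases c) auto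
        hence "hb x = 0" using hb by (auto simp: coarse_fns_def)
        thus ?thesis by (simp add: restr_def)
      next
        case False thus ?thesis unfolding restr_def by (simp only: if_False)
      qed
    qed
    thus "y \<in> {\<lambda>_. 0}" using y by simp
  qed
  have "card (restr L n ` ?A) \<le> card {\<lambda>_::nat. 0::int}" by (rule card_mono[OF _ sub]) simp
  thus ?case using finite_subset[OF sub] by simp
next
  case (Suc d)
  let ?A = "{hb \<in> coarse_fns L l. maxq L l hb < Dh}"
  define k where "k = n - Suc d"
  have kk: "n - d = k + 1" and jk: "j + 1 \<le> k" and kn: "k + 1 \<le> n" using Suc.prems by (auto simp: k_def)
  have IH: "finite (restr L (k+1) ` ?A) \<and> card (restr L (k+1) ` ?A)
        \<le> (\<Prod>k\<in>{k+1..<n}. card (bset (L div 2^(k+1)) (real (L div 2^(k+1)) * (2*Dh*16^(k-j)))))"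
    using Suc.IH Suc.prems kk by simp
  define N where "N = L div 2^(k+1)"
  define Bk where "Bk = bset N (real N * (2*Dh*16^(k-j)))"
  have N0: "N > 0" using L_split(2)[OF L kn] by (simp add: N_def)
  have fB: "finite Bk"
    using count_ball[of N "real N * (2*Dh*16^(k-j))"] N0 Dh0 unfolding Bk_def bset_def by simp
  have gsub: "emap L l k ` ?A \<subseteq> Bk"
    using level_constraint[OF L l jk kn] unfolding Bk_def N_def by auto
  have cf: "finite (restr L k ` ?A) \<and> card (restr L k ` ?A) \<le> card (restr L (k+1) ` ?A) * card (emap L l k ` ?A)"
    by (rule card_factor) (use IH finite_subset[OF gsub fB] reconstruct[OF L l jk kn] in auto)
  have "card (restr L k ` ?A) \<le> (\<Prod>k\<in>{k+1..<n}. card (bset (L div 2^(k+1)) (real (L div 2^(k+1)) * (2*Dh*16^(k-j))))) * card Bk"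
    using cf IH card_mono[OF fB gsub] by (meson le_trans mult_le_mono)
  also have "\<dots> = (\<Prod>k\<in>{k..<n}. card (bset (L div 2^(k+1)) (real (L div 2^(k+1)) * (2*Dh*16^(k-j)))))"
    using kn by (simp add: prod.atLeast_Suc_lessThan[of k n] Bk_def N_def)
  finally show ?case using cf k_def by (simp add: Suc_diff_Suc)
qed

lemma sum_weights:
  "(\<Sum>k\<in>{j+1..<j+1+t}. 2^(j+t-k) * (6 + 2*(k-j))) + 2*t + 10 = (10::nat) * 2^t"
proof (induction t)
  case 0 then show ?case by simp
next
  case (Suc t)
  have s: "{j+1..<j+1+Suc t} = insert (j+1+t) {j+1..<j+1+t}" by auto
  have c: "(\<Sum>k\<in>{j+1..<j+1+t}. 2^(j+Suc t-k) * (6 + 2*(k-j)))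
      = 2 * (\<Sum>k\<in>{j+1..<j+1+t}. 2^(j+t-k) * (6 + 2*(k-j)))"
    unfolding sum_distrib_left
  proof (rule sum.cong[OF refl])
    fix k assume "k \<in> {j+1..<j+1+t}"
    hence "j + Suc t - k = Suc (j + t - k)" by auto
    thus "2^(j+Suc t-k) * (6 + 2*(k-j)) = 2 * (2^(j+t-k) * (6 + 2*(k-j)))" by simp
  qed
  have "(\<Sum>k\<in>{j+1..<j+1+Suc t}. 2^(j+Suc t-k) * (6 + 2*(k-j)))
      = 2^(j+Suc t-(j+1+t)) * (6 + 2*((j+1+t)-j)) + (\<Sum>k\<in>{j+1..<j+1+t}. 2^(j+Suc t-k) * (6 + 2*(k-j)))"
    unfolding s by (subst sum.insert) auto
  also have "\<dots> = 8 + 2*t + 2 * (\<Sum>k\<in>{j+1..<j+1+t}. 2^(j+t-k) * (6 + 2*(k-j)))"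
    unfolding c by simp
  finally have eq: "(\<Sum>k\<in>{j+1..<j+1+Suc t}. 2^(j+Suc t-k) * (6 + 2*(k-j)))
      = 8 + 2*t + 2 * (\<Sum>k\<in>{j+1..<j+1+t}. 2^(j+t-k) * (6 + 2*(k-j)))" .
  show ?case unfolding power_Suc eq using Suc.IH by simp
qed

lemma level_bound:
  fixes Dh :: real
  assumes Dh: "8 \<le> Dh" and N0: "N > 0"
  shows "(2 * exp 1 * (1 + sqrt (2 * Dh * 16^i)))^N \<le> exp (real N * ((6 + 2 * real i) * ln Dh))"
proof -
  define s where "s = sqrt Dh"
  have s1: "1 \<le> s" using Dh by (simp add: s_def)
  have p4: "(1::real) \<le> 4^i" by simp
  have sq16: "sqrt ((16::real)^i) = 4^i"
  proof -
    have "(16::real)^i = (4^2)^i" by simp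
    also have "\<dots> = (4^i)^2" by (metis power_mult mult.commute)
    finally have "(16::real)^i = (4^i)^2" .
    thus ?thesis by simp
  qed
  have sq2: "sqrt 2 \<le> (3/2::real)"
    by (rule real_le_lsqrt) (auto simp: power2_eq_square)
  have q: "sqrt (2 * Dh * 16^i) = sqrt 2 * s * 4^i"
    by (simp add: s_def real_sqrt_mult sq16)
  have "1 + sqrt 2 * s * 4^i \<le> (5/2) * (s * 4^i)"
  proof -
    have "1 \<le> s * 4^i" using s1 p4 by (metis mult_mono' mult_1 zero_le_one)
    moreover have "sqrt 2 * (s * 4^i) \<le> (3/2) * (s * 4^i)"
      using sq2 s1 p4 by (intro mult_right_mono) auto
    ultimately show ?thesis by (simp add: mult.assoc)
  qed
  hence X: "2 * exp 1 * (1 + sqrt (2 * Dh * 16^i)) \<le> 2 * 3 * ((5/2) * (s * 4^i))"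
    unfolding q using exp_le s1 by (intro mult_mono) auto
  also have "\<dots> \<le> 2^5 * 2^(2*i) * s"
    using s1 by (simp add: power_mult)
  finally have X2: "2 * exp 1 * (1 + sqrt (2 * Dh * 16^i)) \<le> 2^(5 + 2*i) * s"
    by (simp add: power_add)
  have Xpos: "0 < 2 * exp 1 * (1 + sqrt (2 * Dh * 16^i))"
  proof -
    have "0 \<le> sqrt (2 * Dh * 16^i)" using Dh by simp
    hence "0 < 1 + sqrt (2 * Dh * 16^i)" by linarith
    thus ?thesis by simp
  qed
  have lnDh: "1 \<le> ln Dh"
  proof -
    have "exp 1 \<le> Dh" using exp_le Dh by simp
    thus ?thesis using Dh by (simp add: ln_ge_iff)
  qed
  have "ln (2 * exp 1 * (1 + sqrt (2 * Dh * 16^i))) \<le> ln (2^(5 + 2*i) * s)"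
    using X2 Xpos by (rule ln_mono)
  also have "\<dots> = real (5 + 2*i) * ln 2 + ln Dh / 2"
    using s1 Dh by (simp add: ln_mult ln_realpow s_def ln_sqrt)
  also have "\<dots> \<le> real (5 + 2*i) + ln Dh / 2"
    using ln_2_less_1 by (intro add_right_mono) (simp add: mult_left_le)
  also have "\<dots> \<le> (6 + 2 * real i) * ln Dh"
  proof -
    have a: "real i * 1 \<le> real i * ln Dh" by (rule mult_left_mono[OF lnDh]) simp
    have b: "(6 + 2 * real i) * ln Dh = 6 * ln Dh + 2 * (real i * ln Dh)" by (simp add: algebra_simps)
    show ?thesis unfolding b using a lnDh by simp
  qed
  finally have lnX: "ln (2 * exp 1 * (1 + sqrt (2 * Dh * 16^i))) \<le> (6 + 2 * real i) * ln Dh" .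
  have "(2 * exp 1 * (1 + sqrt (2 * Dh * 16^i)))^N = exp (real N * ln (2 * exp 1 * (1 + sqrt (2 * Dh * 16^i))))"
    using Xpos by (simp add: exp_of_nat_mult[symmetric] ln_realpow[symmetric])
  also have "\<dots> \<le> exp (real N * ((6 + 2 * real i) * ln Dh))"
    using lnX by (simp add: mult_left_mono)
  finally show ?thesis .
qed

theorem lemma8:
  shows "\<exists>C::real. \<forall>(L::nat) (l::nat) (Dh::real).
    (\<exists>n. L = 2 ^ n) \<and> 2 \<le> L \<and> (\<exists>j. l = 2 ^ j) \<and> 2 * l \<le> L \<and> C \<le> Dh \<longrightarrow>
      finite {hb \<in> coarse_fns L l. maxq L l hb < Dh} \<and>
      ln (real (card {hb \<in> coarse_fns L l. maxq L l hb < Dh}))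
        \<le> C * (real L / real l) * ln Dh"
proof (rule exI[of _ 8], intro allI impI, elim conjE exE)
  fix L l :: nat and Dh :: real and n j
  assume L: "L = 2^n" and L2: "2 \<le> L" and l: "l = 2^j" and lL: "2 * l \<le> L" and Dh: "8 \<le> Dh"
  let ?A = "{hb \<in> coarse_fns L l. maxq L l hb < Dh}"
  have Dh0: "Dh > 0" using Dh by simp
  have jn: "j + 1 \<le> n"
  proof -
    have "(2::nat)^(j+1) \<le> 2^n" using lL L l by simp
    thus ?thesis by (rule power_le_imp_le_exp[rotated]) simp
  qed
  define t where "t = n - (j + 1)"
  have nt: "n = j + 1 + t" using jn by (simp add: t_def)
  define B where "B = (\<lambda>k. card (bset (L div 2^(k+1)) (real (L div 2^(k+1)) * (2*Dh*16^(k-j)))))"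
  have lev: "finite (restr L (j+1) ` ?A) \<and> card (restr L (j+1) ` ?A) \<le> (\<Prod>k\<in>{j+1..<n}. B k)"
    using levels[OF L l jn Dh0, of "n - (j+1)"] jn unfolding B_def by (simp add: Suc_diff_Suc)
  have top: "restr L (j+1) ` ?A = ?A"
  proof -
    have "restr L (j+1) hb = hb" if "hb \<in> coarse_fns L l" for hb
    proof (rule ext)
      fix x
      show "restr L (j+1) hb x = hb x"
        using that l unfolding restr_def coarse_fns_def by auto
    qed
    thus ?thesis by (auto simp: image_iff)
  qed
  have fin: "finite ?A" and cA: "card ?A \<le> (\<Prod>k\<in>{j+1..<n}. B k)" using lev top by auto
  define w where "w = (\<lambda>k. real (2^(n-k-1)) * ((6 + 2 * real (k-j)) * ln Dh))"
  have Bk: "real (B k) \<le> exp (w k)" if k: "k \<in> {j+1..<n}" for k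
  proof -
    have kn: "k + 1 \<le> n" using k by auto
    define N where "N = L div 2^(k+1)"
    have N2: "N = 2^(n-k-1)" using L_split(2)[OF L kn] by (simp add: N_def)
    have N0: "N > 0" by (simp add: N2)
    have "real (B k) \<le> (2 * exp 1 * (1 + sqrt (real N * (2*Dh*16^(k-j)) / real N)))^N"
      using count_ball[of N "real N * (2*Dh*16^(k-j))"] N0 Dh0 unfolding B_def bset_def N_def by simp
    also have "\<dots> = (2 * exp 1 * (1 + sqrt (2*Dh*16^(k-j))))^N" using N0 by simp
    also have "\<dots> \<le> exp (real N * ((6 + 2 * real (k-j)) * ln Dh))" by (rule level_bound[OF Dh N0])
    finally show ?thesis by (simp add: w_def N2)
  qed
  have "real (card ?A) \<le> real (\<Prod>k\<in>{j+1..<n}. B k)" using cA by (simp only: of_nat_le_iff)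
  also have "\<dots> = (\<Prod>k\<in>{j+1..<n}. real (B k))" by (rule of_nat_prod)
  also have "\<dots> \<le> (\<Prod>k\<in>{j+1..<n}. exp (w k))" by (rule prod_mono) (use Bk in auto)
  also have "\<dots> = exp (\<Sum>k\<in>{j+1..<n}. w k)" by (simp add: exp_sum)
  finally have cE: "real (card ?A) \<le> exp (\<Sum>k\<in>{j+1..<n}. w k)" .
  have lnDh: "0 \<le> ln Dh" using Dh by simp
  have sw: "(\<Sum>k\<in>{j+1..<n}. w k) = real (\<Sum>k\<in>{j+1..<j+1+t}. 2^(j+t-k) * (6 + 2*(k-j))) * ln Dh"
    unfolding w_def nt of_nat_sum sum_distrib_right
  proof (rule sum.cong[OF refl])
    fix k assume "k \<in> {j+1..<j+1+t}"
    hence e: "j+1+t-k-1 = j+t-k" by auto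
    show "real (2^(j+1+t-k-1)) * ((6 + 2 * real (k-j)) * ln Dh) = real (2^(j+t-k) * (6 + 2*(k-j))) * ln Dh"
      unfolding e by (simp only: of_nat_mult of_nat_add of_nat_numeral mult.assoc)
  qed
  have "(\<Sum>k\<in>{j+1..<j+1+t}. 2^(j+t-k) * (6 + 2*(k-j))) \<le> (10::nat) * 2^t"
    using sum_weights[of j t] by linarith
  hence "real (\<Sum>k\<in>{j+1..<j+1+t}. 2^(j+t-k) * (6 + 2*(k-j))) \<le> real ((10::nat) * 2^t)"
    by (simp only: of_nat_le_iff)
  also have "real ((10::nat) * 2^t) = 10 * 2^t" by simp
  also have "(10::real) * 2^t = 5 * (real L / real l)"
    unfolding L l nt by (simp add: power_add)
  finally have "(\<Sum>k\<in>{j+1..<n}. w k) \<le> 5 * (real L / real l) * ln Dh"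
    unfolding sw using lnDh by (intro mult_right_mono) auto
  also have "\<dots> \<le> 8 * (real L / real l) * ln Dh"
    using lnDh by (intro mult_right_mono) auto
  finally have sw8: "(\<Sum>k\<in>{j+1..<n}. w k) \<le> 8 * (real L / real l) * ln Dh" .
  have "ln (real (card ?A)) \<le> 8 * (real L / real l) * ln Dh"
  proof (cases "card ?A = 0")
    case True thus ?thesis using lnDh by simp
  next
    case False
    hence "ln (real (card ?A)) \<le> ln (exp (\<Sum>k\<in>{j+1..<n}. w k))" using cE by (intro ln_mono) auto
    thus ?thesis using sw8 by simp
  qed
  thus "finite ?A \<and> ln (real (card ?A)) \<le> 8 * (real L / real l) * ln Dh" using fin by simp
qed

end
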